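(* Let $T>0$, $F:\mathbb{R}\times\mathbb{R}^n\rightrightarrows\mathbb{R}^n$ a set-valued mapping, $G_t(x):=F(t,x)$ for $t\in[0,T]$, $x\in\mathbb{R}^n$, and $x:[0,T]\to\mathbb{R}^n$ a mapping. Assume that for each $\varepsilon>0$ there is $\beta>0$ such that for each $t\in[0,T]$, each $(u,y)\in(B[x(t),\beta]\times B[0,\beta])\cap\operatorname{gph}G_t$ and each $(y^*,x^* )\in\operatorname{gph}D^*G_t(u,y)$, $$|\langle x^*,u-x(t)\rangle-\langle y^*,y\rangle|\le\varepsilon\|(x^*,y^* )\|\,\|(u,y)-(x(t),0)\|.$$ Then for each $\varepsilon>0$ there is $\beta>0$ such that for each $t\in[0,T]$, each $(u,y)\in(B[x(t),\beta]\times B[0,\beta])\cap\operatorname{gph}G_t$ and each $(A,B)\in\mathcal{A}_{\mathrm{reg}}G_t(u,y)$, $$\|u-A^{-1}By-x(t)\|\le\varepsilon\,\|A^{-1}\|\,\|(A\mid B)\|_F\,\|(u,y)-(x(t),0)\|.$$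
   Context: Euclidean norm on $\mathbb{R}^n$, max-norm on products, $\|A^{-1}\|$ the induced operator norm, $\|\cdot\|_F$ the Frobenius norm, $(A\mid B)$ horizontal concatenation; $B[z,r]$ closed ball. Limiting coderivative: $\operatorname{gph}D^*G(x,y)=\{(y^*,x^* ):(x^*,-y^* )\in N_{\operatorname{gph}G}(x,y)\}$, $N$ the limiting normal cone. For $G:\mathbb{R}^n\rightrightarrows\mathbb{R}^n$ and $(x,y)\in\operatorname{gph}G$, $\mathcal{A}_{\mathrm{reg}}G(x,y)$ is the set of pairs $(A,B)$ of $n\times n$ matrices such that $A$ is invertible and $((B)_i^T,(A)_i^T)\in\operatorname{gph}D^*G(x,y)$ for each $i=1,\dots,n$, where $(M)_i$ denotes the $i$-th row of $M$. *)

theory Defs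
  imports "HOL-Analysis.Analysis"
begin

definition frechet_normal :: "'a::real_inner set \<Rightarrow> 'a \<Rightarrow> 'a set" where
  "frechet_normal S z = {v. z \<in> S \<and>
     (\<forall>e>0. \<exists>d>0. \<forall>z'\<in>S. norm (z' - z) < d \<longrightarrow> inner v (z' - z) \<le> e * norm (z' - z))}"

definition limiting_normal :: "'a::real_inner set \<Rightarrow> 'a \<Rightarrow> 'a set" where
  "limiting_normal S z = {v. z \<in> S \<and> (\<exists>zs vs. (\<forall>k. zs k \<in> S \<and> vs k \<in> frechet_normal S (zs k))
       \<and> zs \<longlonglongrightarrow> z \<and> vs \<longlonglongrightarrow> v)}"

definition gph :: "('a \<Rightarrow> 'b set) \<Rightarrow> ('a \<times> 'b) set" where
  "gph G = {(x, y). y \<in> G x}"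

definition coderiv_gph :: "('a::real_inner \<Rightarrow> 'b::real_inner set) \<Rightarrow> 'a \<Rightarrow> 'b \<Rightarrow> ('b \<times> 'a) set" where
  "coderiv_gph G x y = {(ys, xs). (xs, - ys) \<in> limiting_normal (gph G) (x, y)}"

definition A_reg :: "(real^'n \<Rightarrow> (real^'n) set) \<Rightarrow> real^'n \<Rightarrow> real^'n
      \<Rightarrow> ((real^'n^'n) \<times> (real^'n^'n)) set" where
  "A_reg G x y = {(A, B). invertible A \<and> (\<forall>i. (B $ i, A $ i) \<in> coderiv_gph G x y)}"

definition frob_concat :: "real^'n^'n \<Rightarrow> real^'n^'n \<Rightarrow> real" where
  "frob_concat A B = sqrt (\<Sum>i\<in>UNIV. \<Sum>j\<in>UNIV. (A $ i $ j)\<^sup>2 + (B $ i $ j)\<^sup>2)"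

definition mat_opnorm :: "real^'n^'n \<Rightarrow> real" where
  "mat_opnorm M = onorm (\<lambda>v. M *v v)"

end

theory Submission
  imports Defs
begin

lemma vec_norm_sq: "(norm (v::real^'n))\<^sup>2 = (\<Sum>j\<in>UNIV. (v$j)\<^sup>2)"
  by (simp add: norm_vec_def L2_set_def sum_nonneg)

lemma frob_bound:
  fixes w :: "real^'n" and A B :: "real^'n^'n"
  assumes c: "c \<ge> 0"
    and h: "\<And>i. \<bar>w $ i\<bar> \<le> c * max (norm (A$i)) (norm (B$i))"
  shows "norm w \<le> c * frob_concat A B"
proof -
  have "\<And>i. (w$i)\<^sup>2 \<le> c\<^sup>2 * (\<Sum>j\<in>UNIV. (A $ i $ j)\<^sup>2 + (B $ i $ j)\<^sup>2)"
  proof -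
    fix i
    have "(w$i)\<^sup>2 \<le> (c * max (norm (A$i)) (norm (B$i)))\<^sup>2"
      using h[of i] by (metis abs_ge_zero order_trans power2_abs power_mono)
    also have "\<dots> = c\<^sup>2 * (max (norm (A$i)) (norm (B$i)))\<^sup>2" by (simp add: power_mult_distrib)
    also have "(max (norm (A$i)) (norm (B$i)))\<^sup>2 \<le> (norm (A$i))\<^sup>2 + (norm (B$i))\<^sup>2"
      by (simp add: max_def)
    also have "(norm (A$i))\<^sup>2 + (norm (B$i))\<^sup>2 = (\<Sum>j\<in>UNIV. (A $ i $ j)\<^sup>2 + (B $ i $ j)\<^sup>2)"
      by (simp add: vec_norm_sq sum.distrib)
    finally show "(w$i)\<^sup>2 \<le> c\<^sup>2 * (\<Sum>j\<in>UNIV. (A $ i $ j)\<^sup>2 + (B $ i $ j)\<^sup>2)"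
      using c by (simp add: mult_left_mono)
  qed
  then have "(\<Sum>i\<in>UNIV. (w$i)\<^sup>2) \<le> c\<^sup>2 * (\<Sum>i\<in>UNIV. \<Sum>j\<in>UNIV. (A $ i $ j)\<^sup>2 + (B $ i $ j)\<^sup>2)"
    by (simp add: sum_distrib_left sum_mono)
  then have "sqrt (\<Sum>i\<in>UNIV. (w$i)\<^sup>2) \<le> sqrt (c\<^sup>2 * (\<Sum>i\<in>UNIV. \<Sum>j\<in>UNIV. (A $ i $ j)\<^sup>2 + (B $ i $ j)\<^sup>2))"
    using real_sqrt_le_mono by blast
  moreover have "norm w = sqrt (\<Sum>i\<in>UNIV. (w$i)\<^sup>2)"
    by (metis vec_norm_sq norm_ge_zero real_sqrt_unique)
  ultimately show ?thesis using c by (simp add: frob_concat_def real_sqrt_mult)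
qed

theorem lemma5p1:
  fixes T :: real and F :: "real \<Rightarrow> real^'n \<Rightarrow> (real^'n) set" and x :: "real \<Rightarrow> real^'n"
  assumes "T > 0"
  assumes hyp: "\<forall>\<epsilon>>0. \<exists>\<beta>>0. \<forall>t\<in>{0..T}. \<forall>u y.
      u \<in> cball (x t) \<beta> \<and> y \<in> cball 0 \<beta> \<and> (u, y) \<in> gph (F t) \<longrightarrow>
      (\<forall>ys xs. (ys, xs) \<in> coderiv_gph (F t) u y \<longrightarrow>
         \<bar>inner xs (u - x t) - inner ys y\<bar>
           \<le> \<epsilon> * max (norm xs) (norm ys) * max (norm (u - x t)) (norm y))"
  shows "\<forall>\<epsilon>>0. \<exists>\<beta>>0. \<forall>t\<in>{0..T}. \<forall>u y.
      u \<in> cball (x t) \<beta> \<and> y \<in> cball 0 \<beta> \<and> (u, y) \<in> gph (F t) \<longrightarrow>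
      (\<forall>A B. (A, B) \<in> A_reg (F t) u y \<longrightarrow>
         norm (u - matrix_inv A *v (B *v y) - x t)
           \<le> \<epsilon> * mat_opnorm (matrix_inv A) * frob_concat A B * max (norm (u - x t)) (norm y))"
proof (intro allI impI)
  fix \<epsilon> :: real assume e: "\<epsilon> > 0"
  obtain \<beta> where b: "\<beta> > 0" and H: "\<forall>t\<in>{0..T}. \<forall>u y.
      u \<in> cball (x t) \<beta> \<and> y \<in> cball 0 \<beta> \<and> (u, y) \<in> gph (F t) \<longrightarrow>
      (\<forall>ys xs. (ys, xs) \<in> coderiv_gph (F t) u y \<longrightarrow>
         \<bar>inner xs (u - x t) - inner ys y\<bar>
           \<le> \<epsilon> * max (norm xs) (norm ys) * max (norm (u - x t)) (norm y))"
    using hyp e by blast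
  show "\<exists>\<beta>>0. \<forall>t\<in>{0..T}. \<forall>u y.
      u \<in> cball (x t) \<beta> \<and> y \<in> cball 0 \<beta> \<and> (u, y) \<in> gph (F t) \<longrightarrow>
      (\<forall>A B. (A, B) \<in> A_reg (F t) u y \<longrightarrow>
         norm (u - matrix_inv A *v (B *v y) - x t)
           \<le> \<epsilon> * mat_opnorm (matrix_inv A) * frob_concat A B * max (norm (u - x t)) (norm y))"
  proof (intro exI[of _ \<beta>] conjI b ballI allI impI)
    fix t u y A B
    assume t: "t \<in> {0..T}"
      and uy: "u \<in> cball (x t) \<beta> \<and> y \<in> cball 0 \<beta> \<and> (u, y) \<in> gph (F t)"
      and AB: "(A, B) \<in> A_reg (F t) u y"
    let ?m = "max (norm (u - x t)) (norm y)"
    define w where "w = A *v (u - x t) - B *v y"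
    have inv: "invertible A" and rows: "\<And>i. (B $ i, A $ i) \<in> coderiv_gph (F t) u y"
      using AB by (auto simp: A_reg_def)
    have wi: "\<bar>w $ i\<bar> \<le> (\<epsilon> * ?m) * max (norm (A$i)) (norm (B$i))" for i
    proof -
      have "\<bar>inner (A$i) (u - x t) - inner (B$i) y\<bar> \<le> \<epsilon> * max (norm (A$i)) (norm (B$i)) * ?m"
        using H t uy rows[of i] by blast
      then show ?thesis by (simp add: w_def matrix_vector_mul_component mult_ac)
    qed
    have m0: "?m \<ge> 0" by (simp add: le_max_iff_disj)
    have wn: "norm w \<le> (\<epsilon> * ?m) * frob_concat A B"
      by (rule frob_bound[OF _ wi]) (use e m0 in simp)
    have "matrix_inv A ** A = mat 1" using inv unfolding invertible_def matrix_inv_def by (rule someI2_ex) auto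
    then have "matrix_inv A *v w = (u - x t) - matrix_inv A *v (B *v y)"
      by (simp add: w_def matrix_vector_mult_diff_distrib matrix_vector_mul_assoc)
    then have eq: "u - matrix_inv A *v (B *v y) - x t = matrix_inv A *v w"
      by (simp add: algebra_simps)
    have "norm (matrix_inv A *v w) \<le> mat_opnorm (matrix_inv A) * norm w"
      unfolding mat_opnorm_def by (rule onorm[OF matrix_vector_mul_bounded_linear])
    also have "\<dots> \<le> mat_opnorm (matrix_inv A) * ((\<epsilon> * ?m) * frob_concat A B)"
      by (rule mult_left_mono[OF wn]) (simp add: mat_opnorm_def onorm_pos_le matrix_vector_mul_bounded_linear)
    finally show "norm (u - matrix_inv A *v (B *v y) - x t)
           \<le> \<epsilon> * mat_opnorm (matrix_inv A) * frob_concat A B * ?m"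
      by (simp add: eq mult_ac)
  qed
qed

end
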